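(* Let $E$ be a Banach lattice. Then the set $B_{UDP}(E)$ of all $uaw$-Dunford-Pettis operators on $E$ is a subalgebra of the algebra $B(E)$ of all bounded operators on $E$.
   Context: A net $(x_\alpha)$ in a Banach lattice $E$ is $uaw$-convergent to $x$ if $|x_\alpha-x|\wedge u\to 0$ weakly for every $u\in E_+$. A bounded operator $T\colon E\to E$ is $uaw$-Dunford-Pettis if for every norm bounded sequence $(x_n)$ in $E$ that is $uaw$-convergent to $0$ one has $\|Tx_n\|\to 0$. *)

theory Defs
  imports "HOL-Analysis.Analysis"
begin

class banach_lattice = banach + ordered_real_vector + lattice +
  assumes lattice_norm_mono: "sup x (- x) \<le> sup y (- y) \<Longrightarrow> norm x \<le> norm y"

definition lmod :: "'a::banach_lattice \<Rightarrow> 'a" where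
  "lmod x = sup x (- x)"

definition weakly_tendsto :: "(nat \<Rightarrow> 'a::real_normed_vector) \<Rightarrow> 'a \<Rightarrow> bool" where
  "weakly_tendsto x l \<longleftrightarrow>
     (\<forall>f :: 'a \<Rightarrow> real. bounded_linear f \<longrightarrow> (\<lambda>n. f (x n)) \<longlonglongrightarrow> f l)"

definition uaw_tendsto :: "(nat \<Rightarrow> 'a::banach_lattice) \<Rightarrow> 'a \<Rightarrow> bool" where
  "uaw_tendsto x l \<longleftrightarrow>
     (\<forall>u. 0 \<le> u \<longrightarrow> weakly_tendsto (\<lambda>n. inf (lmod (x n - l)) u) 0)"

definition uaw_DP :: "('a::banach_lattice \<Rightarrow> 'a) \<Rightarrow> bool" where
  "uaw_DP T \<longleftrightarrow> bounded_linear T \<and>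
     (\<forall>x :: nat \<Rightarrow> 'a. bounded (range x) \<and> uaw_tendsto x 0 \<longrightarrow>
        (\<lambda>n. norm (T (x n))) \<longlonglongrightarrow> 0)"

end

theory Submission
  imports Defs
begin

lemma bl_tendsto:
  assumes "bounded_linear S" "(\<lambda>n. norm (y n)) \<longlonglongrightarrow> 0"
  shows "(\<lambda>n. norm (S (y n))) \<longlonglongrightarrow> 0"
proof -
  obtain K where K: "\<And>x. norm (S x) \<le> norm x * K" "K > 0"
    using bounded_linear.pos_bounded[OF assms(1)] by blast
  have "(\<lambda>n. norm (y n) * K) \<longlonglongrightarrow> 0 * K"
    by (intro tendsto_intros assms(2))
  then have L: "(\<lambda>n. norm (y n) * K) \<longlonglongrightarrow> 0" by simp
  show ?thesis
    by (rule tendsto_sandwich[OF _ _ tendsto_const[of 0] L, simplified]) (use K in \<open>auto intro: always_eventually\<close>)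
qed

theorem corollary2p8:
  fixes B_UDP :: "('a::banach_lattice \<Rightarrow> 'a) set"
  defines "B_UDP \<equiv> {T. uaw_DP T}"
  shows "B_UDP \<subseteq> {T. bounded_linear T}
    \<and> (\<lambda>x. 0) \<in> B_UDP
    \<and> (\<forall>S\<in>B_UDP. \<forall>T\<in>B_UDP. (\<lambda>x. S x + T x) \<in> B_UDP)
    \<and> (\<forall>c::real. \<forall>T\<in>B_UDP. (\<lambda>x. c *\<^sub>R T x) \<in> B_UDP)
    \<and> (\<forall>S\<in>B_UDP. \<forall>T\<in>B_UDP. S \<circ> T \<in> B_UDP)"
proof (intro conjI ballI allI)
  show "B_UDP \<subseteq> {T. bounded_linear T}" unfolding B_UDP_def uaw_DP_def by auto
  show "(\<lambda>x. 0) \<in> B_UDP" unfolding B_UDP_def uaw_DP_def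
    by (auto intro: bounded_linear_zero)
next
  fix S T assume S: "S \<in> B_UDP" and T: "T \<in> B_UDP"
  then have bS: "bounded_linear S" and bT: "bounded_linear T"
    and dS: "\<And>x. bounded (range x) \<Longrightarrow> uaw_tendsto x 0 \<Longrightarrow> (\<lambda>n. norm (S (x n))) \<longlonglongrightarrow> 0"
    and dT: "\<And>x. bounded (range x) \<Longrightarrow> uaw_tendsto x 0 \<Longrightarrow> (\<lambda>n. norm (T (x n))) \<longlonglongrightarrow> 0"
    unfolding B_UDP_def uaw_DP_def by auto
  show "(\<lambda>x. S x + T x) \<in> B_UDP" unfolding B_UDP_def uaw_DP_def
  proof (intro CollectI conjI allI impI)
    show "bounded_linear (\<lambda>x. S x + T x)" using bS bT by (rule bounded_linear_add)
    fix x :: "nat \<Rightarrow> 'a" assume h: "bounded (range x) \<and> uaw_tendsto x 0"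
    have "(\<lambda>n. norm (S (x n)) + norm (T (x n))) \<longlonglongrightarrow> 0 + 0"
      using dS dT h by (intro tendsto_add) auto
    then have L: "(\<lambda>n. norm (S (x n)) + norm (T (x n))) \<longlonglongrightarrow> 0" by simp
    show "(\<lambda>n. norm (S (x n) + T (x n))) \<longlonglongrightarrow> 0"
      by (rule tendsto_sandwich[OF _ _ tendsto_const[of 0] L, simplified]) (auto intro: always_eventually norm_triangle_ineq)
  qed
  show "S \<circ> T \<in> B_UDP" unfolding B_UDP_def uaw_DP_def
  proof (intro CollectI conjI allI impI)
    show "bounded_linear (S \<circ> T)" using bounded_linear_compose[OF bS bT] by (simp add: o_def)
    fix x :: "nat \<Rightarrow> 'a" assume h: "bounded (range x) \<and> uaw_tendsto x 0"
    show "(\<lambda>n. norm ((S \<circ> T) (x n))) \<longlonglongrightarrow> 0"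
      using bl_tendsto[OF bS dT[OF conjunct1[OF h] conjunct2[OF h]]] by simp
  qed
next
  fix c :: real and T assume T: "T \<in> B_UDP"
  then have bT: "bounded_linear T"
    and dT: "\<And>x. bounded (range x) \<Longrightarrow> uaw_tendsto x 0 \<Longrightarrow> (\<lambda>n. norm (T (x n))) \<longlonglongrightarrow> 0"
    unfolding B_UDP_def uaw_DP_def by auto
  show "(\<lambda>x. c *\<^sub>R T x) \<in> B_UDP" unfolding B_UDP_def uaw_DP_def
  proof (intro CollectI conjI allI impI)
    show "bounded_linear (\<lambda>x. c *\<^sub>R T x)" using bounded_linear_compose[OF bounded_linear_scaleR_right[of c] bT] by simp
    fix x :: "nat \<Rightarrow> 'a" assume h: "bounded (range x) \<and> uaw_tendsto x 0"
    have "(\<lambda>n. \<bar>c\<bar> * norm (T (x n))) \<longlonglongrightarrow> \<bar>c\<bar> * 0"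
      using dT h by (intro tendsto_mult tendsto_const) auto
    then show "(\<lambda>n. norm (c *\<^sub>R T (x n))) \<longlonglongrightarrow> 0" by simp
  qed
qed

end
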